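(* Let $D$ be a division semialgebra over $\mathbb{Z}_\mathrm{max}$ with finite unit index. Then the group $G=D^\times/\mathbb{Z}_\mathrm{max}^\times$ is cyclic.
   Context: A (possibly noncommutative) semiring has a commutative associative addition with identity $0$ and an associative multiplication with identity $1$, satisfying both distributive laws; a division semiring is one in which every nonzero element is invertible. $\mathbb{Z}_\mathrm{max}=\mathbb{Z}\cup\{-\infty\}$ is the semifield with addition $\max$ and multiplication ordinary addition. A division semialgebra over a semifield $K$ is a division semiring $D$ with an injective homomorphism from $K$ into the center of $D$. The unit index is $\mathrm{ui}(D/K)=|D^\times/K^\times|$. *)

theory Defs
  imports "HOL-Algebra.Coset" "HOL-Algebra.Generated_Groups"
begin

text \<open>Z_max = Z \<union> {-\<infinity>} is modelled as int option, None standing for -\<infinity>.\<close>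

fun zmax_add :: "int option \<Rightarrow> int option \<Rightarrow> int option" where
  "zmax_add None b = b"
| "zmax_add (Some a) None = Some a"
| "zmax_add (Some a) (Some b) = Some (max a b)"

fun zmax_mul :: "int option \<Rightarrow> int option \<Rightarrow> int option" where
  "zmax_mul (Some a) (Some b) = Some (a + b)"
| "zmax_mul _ _ = None"

definition zmax_zero :: "int option" where "zmax_zero = None"
definition zmax_one :: "int option" where "zmax_one = Some 0"

definition zmax_units :: "int option set" where "zmax_units = range Some"

text \<open>A (possibly noncommutative) semiring in the sense of the paper: commutative
  monoid under +, monoid under *, both distributive laws.  This is exactly the
  sort {semiring, comm_monoid_add, monoid_mult}.\<close>

definition dunits :: "'d::{semiring,comm_monoid_add,monoid_mult} set" where
  "dunits = {x. \<exists>y. x * y = 1 \<and> y * x = 1}"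

definition division_semiring :: "'d::{semiring,comm_monoid_add,monoid_mult} itself \<Rightarrow> bool" where
  "division_semiring _ \<longleftrightarrow> (\<forall>x::'d. x \<noteq> 0 \<longrightarrow> x \<in> dunits)"

definition center :: "'d::{semiring,comm_monoid_add,monoid_mult} set" where
  "center = {z. \<forall>y::'d. z * y = y * z}"

definition semiring_hom_zmax :: "(int option \<Rightarrow> 'd::{semiring,comm_monoid_add,monoid_mult}) \<Rightarrow> bool" where
  "semiring_hom_zmax \<phi> \<longleftrightarrow>
     \<phi> zmax_zero = 0 \<and> \<phi> zmax_one = 1 \<and>
     (\<forall>a b. \<phi> (zmax_add a b) = \<phi> a + \<phi> b) \<and>
     (\<forall>a b. \<phi> (zmax_mul a b) = \<phi> a * \<phi> b)"

definition division_semialgebra_zmax :: "(int option \<Rightarrow> 'd::{semiring,comm_monoid_add,monoid_mult}) \<Rightarrow> bool" where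
  "division_semialgebra_zmax \<phi> \<longleftrightarrow>
     division_semiring TYPE('d) \<and> semiring_hom_zmax \<phi> \<and> inj \<phi> \<and> range \<phi> \<subseteq> center"

definition unit_group :: "('d::{semiring,comm_monoid_add,monoid_mult}) monoid" where
  "unit_group = \<lparr>carrier = dunits, mult = (*), one = 1\<rparr>"

definition unit_quotient :: "(int option \<Rightarrow> 'd::{semiring,comm_monoid_add,monoid_mult}) \<Rightarrow> 'd set monoid" where
  "unit_quotient \<phi> = unit_group Mod (\<phi> ` zmax_units)"

definition cyclic_group :: "('a, 'b) monoid_scheme \<Rightarrow> bool" where
  "cyclic_group G \<longleftrightarrow> (\<exists>g \<in> carrier G. generate G {g} = carrier G)"

end

theory Submission imports Defs begin

locale dsa =
  fixes \<phi> :: "int option \<Rightarrow> 'd::{semiring,comm_monoid_add,monoid_mult}"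
  assumes ds: "division_semialgebra_zmax \<phi>"
begin

definition T :: "int \<Rightarrow> 'd" where "T k = \<phi> (Some k)"

lemma hom: "semiring_hom_zmax \<phi>" and injphi: "inj \<phi>" and cen: "range \<phi> \<subseteq> center"
  and divs: "division_semiring TYPE('d)"
  using ds by (auto simp: division_semialgebra_zmax_def)

lemma phi0: "\<phi> None = 0" using hom by (simp add: semiring_hom_zmax_def zmax_zero_def)
lemma T0: "T 0 = 1" using hom by (simp add: semiring_hom_zmax_def zmax_one_def T_def)
lemma T_mult: "T a * T b = T (a + b)"
  using hom unfolding semiring_hom_zmax_def T_def by (metis zmax_mul.simps(1))
lemma T_add: "T a + T b = T (max a b)"
  using hom unfolding semiring_hom_zmax_def T_def by (metis zmax_add.simps(3))
lemma T_inj: "T a = T b \<Longrightarrow> a = b"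
  using injphi unfolding T_def by (auto dest: injD)
lemma T_central: "T a * y = y * T a"
  using cen unfolding T_def center_def by auto
lemma one_ne_zero': "(1::'d) \<noteq> 0"
  using injphi T0 phi0 unfolding T_def by (metis injD option.distinct(1))

lemma idem: "(x::'d) + x = x"
proof -
  have "(1::'d) + 1 = 1" using T_add[of 0 0] T0 by simp
  hence "x * (1 + 1) = x" by simp
  thus ?thesis by (simp add: distrib_left)
qed

lemma sum0: "(a::'d) + b = 0 \<Longrightarrow> a = 0"
proof -
  assume h: "a + b = 0"
  have "a = a + (a + b)" using h by simp
  also have "\<dots> = a + b" by (simp add: add.assoc[symmetric] idem)
  finally show ?thesis using h by simp
qed

lemma unit_ex: "(x::'d) \<noteq> 0 \<Longrightarrow> \<exists>y. x * y = 1 \<and> y * x = 1"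
  using divs unfolding division_semiring_def dunits_def by auto

lemma T_unit: "T k \<in> dunits"
  unfolding dunits_def using T_mult[of k "-k"] T_mult[of "-k" k] T0 by auto

lemma T_pow: "T k ^ n = T (k * int n)"
  by (induction n) (auto simp: T0 T_mult algebra_simps)

lemma pow_unit: "x \<in> dunits \<Longrightarrow> (x::'d) ^ n \<in> dunits"
proof -
  assume "x \<in> dunits"
  then obtain y where y: "x * y = 1" "y * x = 1" unfolding dunits_def by auto
  have "x ^ n * y ^ n = 1 \<and> y ^ n * x ^ n = 1"
  proof (induction n)
    case (Suc n)
    have "x ^ Suc n * y ^ Suc n = x * (x ^ n * y ^ n) * y"
      unfolding power_Suc[of x] power_Suc2[of y] by (simp only: mult.assoc)
    moreover have "y ^ Suc n * x ^ Suc n = y * (y ^ n * x ^ n) * x"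
      unfolding power_Suc[of y] power_Suc2[of x] by (simp only: mult.assoc)
    ultimately show ?case using Suc y by simp
  qed simp
  thus ?thesis unfolding dunits_def by auto
qed

lemma mult_unit: "x \<in> dunits \<Longrightarrow> y \<in> dunits \<Longrightarrow> (x::'d) * y \<in> dunits"
proof -
  assume "x \<in> dunits" "y \<in> dunits"
  then obtain x' y' where a: "x * x' = 1" "x' * x = 1" "y * y' = 1" "y' * y = 1"
    unfolding dunits_def by auto
  have "x * y * (y' * x') = x * (y * y') * x'" by (simp add: mult.assoc)
  moreover have "y' * x' * (x * y) = y' * (x' * x) * y" by (simp add: mult.assoc)
  ultimately show ?thesis using a unfolding dunits_def by auto
qed

lemma cancel_r: "u \<in> dunits \<Longrightarrow> a * u = b * (u::'d) \<Longrightarrow> a = b"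
proof -
  assume "u \<in> dunits" "a * u = b * u"
  then obtain v where "u * v = 1" "a * u * v = b * u * v" unfolding dunits_def by auto
  thus ?thesis by (simp add: mult.assoc)
qed

lemma cancel_l: "u \<in> dunits \<Longrightarrow> u * a = u * (b::'d) \<Longrightarrow> a = b"
proof -
  assume "u \<in> dunits" "u * a = u * b"
  then obtain v where "v * u = 1" "v * (u * a) = v * (u * b)" unfolding dunits_def by auto
  thus ?thesis by (simp add: mult.assoc[symmetric])
qed

lemma P: "(1 + x) ^ Suc n = (1 + x) ^ n + (x::'d) ^ Suc n"
proof (induction n)
  case 0 thus ?case by simp
next
  case (Suc n)
  have "(1 + x) ^ Suc (Suc n) = (1 + x) * ((1 + x) ^ n + x ^ Suc n)"
    using Suc by (simp only: power_Suc)
  also have "\<dots> = (1 + x) ^ Suc n + (x ^ Suc n + x ^ Suc (Suc n))"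
    by (simp add: distrib_left distrib_right power_Suc add_ac)
  also have "\<dots> = (1 + x) ^ n + (x ^ Suc n + x ^ Suc n) + x ^ Suc (Suc n)"
    using Suc by (simp add: add_ac)
  also have "\<dots> = (1 + x) ^ Suc n + x ^ Suc (Suc n)"
    using Suc by (simp add: idem add_ac)
  finally show ?case .
qed

lemma R: "(1 + x) ^ n + (x::'d) ^ n = (1 + x) ^ n"
proof (cases n)
  case 0 thus ?thesis by (simp add: idem)
next
  case (Suc m)
  thus ?thesis using P[of x m] by (simp add: add.assoc idem)
qed

lemma R1: "1 + (1 + (x::'d)) ^ n = (1 + x) ^ n"
proof (induction n)
  case 0 thus ?case by (simp add: idem)
next
  case (Suc n) thus ?case using P[of x n] by (metis add.assoc)
qed

lemma Q: "(1 + x) ^ Suc n = 1 + (x::'d) * (1 + x) ^ n"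
proof (induction n)
  case 0 thus ?case by simp
next
  case (Suc n)
  have e1: "(1 + x) ^ Suc m = (1 + x) ^ m + x * (1 + x) ^ m" for m
    by (simp add: power_Suc distrib_right)
  have e2: "(1 + x) ^ n + (1 + x) ^ Suc n = (1 + x) ^ Suc n"
    using e1[of n] by (metis add.assoc idem)
  have "(1 + x) ^ Suc (Suc n) = (1 + x) ^ Suc n + x * (1 + x) ^ Suc n" by (rule e1)
  also have "\<dots> = 1 + x * ((1 + x) ^ n + (1 + x) ^ Suc n)"
    using Suc by (simp add: distrib_left add_ac)
  also have "\<dots> = 1 + x * (1 + x) ^ Suc n" using e2 by simp
  finally show ?case .
qed

lemma split: "(1 + x) ^ (n + m) = (1 + x) ^ n + (x::'d) ^ n * (1 + x) ^ m"
proof (induction m)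
  case 0 thus ?case using R[of x n] by simp
next
  case (Suc m)
  have "(1 + x) ^ (n + Suc m) = (1 + x) ^ (n + m) + x ^ Suc (n + m)"
    using P[of x "n+m"] by simp
  also have "\<dots> = (1 + x) ^ n + x ^ n * ((1 + x) ^ m + x ^ Suc m)"
  proof -
    have "x ^ Suc (n + m) = x ^ n * x ^ Suc m" by (metis power_add add_Suc_right)
    thus ?thesis using Suc by (simp only: distrib_left add.assoc)
  qed
  also have "\<dots> = (1 + x) ^ n + x ^ n * (1 + x) ^ Suc m" using P[of x m] by simp
  finally show ?case .
qed

lemma L1: "n > 0 \<Longrightarrow> (x::'d) ^ n = 1 \<Longrightarrow> x = 1"
proof -
  assume n: "n > 0" and xn: "x ^ n = 1"
  then obtain m where m: "n = Suc m" by (cases n) auto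
  define s where "s = (1 + x) ^ m"
  have "s = (1 + x) ^ Suc m" using P[of x m] R1[of x m] xn m s_def by (simp add: add.commute)
  also have "\<dots> = 1 + x * s" using Q s_def by simp
  also have "x * s + x ^ Suc m = x * s"
    using R[of x m] s_def by (metis distrib_left power_Suc)
  hence "1 + x * s = x * s" using xn m by (simp add: add.commute)
  finally have xs: "s = x * s" .
  have "s \<noteq> 0" using R1[of x m] s_def sum0 one_ne_zero' by metis
  then obtain s' where "s * s' = 1" using unit_ex by auto
  thus ?thesis using xs by (metis mult.assoc mult_1_right)
qed

end

lemma comm_pow: "a * b = b * (a::'d::monoid_mult) \<Longrightarrow> b * a ^ n = a ^ n * b"
proof (induction n)
  case (Suc n)
  have "b * a ^ Suc n = (b * a) * a ^ n" by (simp add: power_Suc mult.assoc)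
  also have "\<dots> = a * (b * a ^ n)" by (metis Suc.prems mult.assoc)
  also have "\<dots> = a ^ Suc n * b" using Suc by (simp add: mult.assoc)
  finally show ?case .
qed simp

lemma mult_pow_comm: "a * b = b * (a::'d::monoid_mult) \<Longrightarrow> (a * b) ^ n = a ^ n * b ^ n"
proof (induction n)
  case (Suc n)
  have "(a * b) ^ Suc n = a * b * (a ^ n * b ^ n)" using Suc by simp
  also have "\<dots> = a * (b * a ^ n) * b ^ n" by (simp add: mult.assoc)
  also have "\<dots> = a * (a ^ n * b) * b ^ n" using comm_pow[OF Suc.prems] by simp
  also have "\<dots> = a ^ Suc n * b ^ Suc n" by (simp add: mult.assoc)
  finally show ?case .
qed simp

lemma conj_pow: "y * y' = 1 \<Longrightarrow> y' * y = 1 \<Longrightarrow> (y * x * y') ^ n = y * (x::'d::monoid_mult) ^ n * y'"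
proof (induction n)
  case 0 thus ?case by (simp add: mult.assoc)
next
  case (Suc n)
  have "(y * x * y') ^ Suc n = y * x * y' * (y * x ^ n * y')" using Suc by simp
  also have "\<dots> = y * x * (y' * y) * x ^ n * y'" by (simp add: mult.assoc)
  also have "\<dots> = y * x ^ Suc n * y'" using Suc by (simp add: mult.assoc)
  finally show ?case .
qed

locale dsaN = dsa \<phi> for \<phi> :: "int option \<Rightarrow> 'd::{semiring,comm_monoid_add,monoid_mult}" +
  fixes N :: nat
  assumes Npos: "N > 0" and Nexp: "\<And>x. x \<in> dunits \<Longrightarrow> \<exists>k. x ^ N = T k"
begin

lemma L5: "y \<in> dunits \<Longrightarrow> x * y = y * x \<Longrightarrow> n > 0 \<Longrightarrow> x ^ n = y ^ n \<Longrightarrow> x = (y::'d)"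
proof -
  assume y: "y \<in> dunits" and c: "x * y = y * x" and n: "n > 0" and e: "x ^ n = y ^ n"
  obtain y' where y': "y * y' = 1" "y' * y = 1" using y unfolding dunits_def by auto
  have c': "x * y' = y' * x"
  proof -
    have "y' * x = y' * x * (y * y')" using y' by simp
    also have "\<dots> = y' * (x * y) * y'" by (simp add: mult.assoc)
    also have "\<dots> = x * y'" using c y' by (simp add: mult.assoc[symmetric])
    finally show ?thesis by simp
  qed
  have "(x * y') ^ n = x ^ n * y' ^ n" by (rule mult_pow_comm[OF c'])
  also have "\<dots> = (y * y') ^ n" using e mult_pow_comm[of y y' n] y' by simp
  finally have "(x * y') ^ n = 1" using y' by simp
  hence "x * y' = 1" using L1 n by blast
  hence "x * y' * y = y" by simp
  thus ?thesis using y' by (simp add: mult.assoc)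
qed

lemma L4: "x \<in> dunits \<Longrightarrow> 1 + x = 1 \<or> 1 + (x::'d) = x"
proof -
  assume x: "x \<in> dunits"
  obtain a where a: "x ^ N = T a" using Nexp x by auto
  have "1 + x \<noteq> 0" using sum0 one_ne_zero' by blast
  hence "1 + x \<in> dunits" using unit_ex unfolding dunits_def by auto
  then obtain c where c: "(1 + x) ^ N = T c" using Nexp by auto
  have "(1 + x) ^ (N + N) = T (c + c)" using c by (simp add: power_add T_mult)
  moreover have "(1 + x) ^ (N + N) = T (max c (a + c))"
    using split[of x N N] a c by (simp add: T_mult T_add)
  ultimately have "c + c = max c (a + c)" using T_inj by metis
  hence cm: "c = max 0 a" by auto
  have cx: "x * (1 + x) = (1 + x) * x" by (simp add: distrib_left distrib_right add.commute)
  show ?thesis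
  proof (cases "a \<ge> 0")
    case True
    hence "(1 + x) ^ N = x ^ N" using a c cm by simp
    hence "1 + x = x" using L5[OF x _ Npos] cx by metis
    thus ?thesis by simp
  next
    case False
    hence "(1 + x) ^ N = 1" using c cm T0 by simp
    hence "1 + x = 1" using L1 Npos by blast
    thus ?thesis by simp
  qed
qed

lemma L6: "x \<in> dunits \<Longrightarrow> y \<in> dunits \<Longrightarrow> x + y = y \<or> x + (y::'d) = x"
proof -
  assume x: "x \<in> dunits" and y: "y \<in> dunits"
  obtain y' where y': "y * y' = 1" "y' * y = 1" "y' \<in> dunits" using y unfolding dunits_def by auto
  have u: "y' * x \<in> dunits" using mult_unit y' x by blast
  have yu: "y * (y' * x) = x" using y' by (simp add: mult.assoc[symmetric])
  from L4[OF u] show ?thesis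
  proof
    assume "1 + y' * x = 1"
    hence "y * (1 + y' * x) = y" by simp
    thus ?thesis using yu by (simp add: distrib_left add.commute)
  next
    assume "1 + y' * x = y' * x"
    hence "y * (1 + y' * x) = x" using yu by simp
    thus ?thesis using yu by (simp add: distrib_left add.commute)
  qed
qed

lemma mono_aux: "x + y = y \<Longrightarrow> (x::'d) ^ k * b + y ^ k * b = y ^ k * b"
proof (induction k)
  case 0 thus ?case by (simp add: idem)
next
  case (Suc k)
  let ?X = "x ^ k * b" and ?Y = "y ^ k * b"
  have h1: "x * ?X + x * ?Y = x * ?Y" using Suc by (metis distrib_left)
  have h2: "x * ?Y + y * ?Y = y * ?Y" using Suc.prems by (metis distrib_right)
  have "x * ?X + y * ?Y = x * ?X + (x * ?Y + y * ?Y)" using h2 by simp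
  also have "\<dots> = y * ?Y" using h1 h2 by (metis add.assoc)
  finally show ?case by (simp add: mult.assoc)
qed

lemma L7: "x \<in> dunits \<Longrightarrow> y \<in> dunits \<Longrightarrow> n > 0 \<Longrightarrow> x ^ n = y ^ n \<Longrightarrow> x = (y::'d)"
proof -
  have main: "x = y" if x: "x \<in> dunits" and y: "y \<in> dunits" and n: "n > 0"
     and e: "x ^ n = y ^ n" and le: "x + y = y" for x y :: 'd and n
  proof -
    obtain m where m: "n = Suc m" using n by (cases n) auto
    let ?A = "x ^ m * x" and ?B = "x ^ m * y"
    have AB: "?A + ?B = ?B" using le by (metis distrib_left)
    have BC: "?B + y ^ m * y = y ^ m * y" using mono_aux[OF le, of m y] .
    have C: "y ^ m * y = ?A" using e m by (metis power_Suc2)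
    have "?B + ?A = ?A" using BC C by simp
    hence "?A = ?B" using AB by (simp add: add.commute)
    thus ?thesis using cancel_l[OF pow_unit[OF x]] by blast
  qed
  assume x: "x \<in> dunits" and y: "y \<in> dunits" and n: "n > 0" and e: "x ^ n = y ^ n"
  from L6[OF x y] show ?thesis
  proof
    assume "x + y = y" thus ?thesis using main x y n e by blast
  next
    assume "x + y = x" hence "y + x = x" by (simp add: add.commute)
    thus ?thesis using main[OF y x n e[symmetric]] by simp
  qed
qed

lemma L8: "x \<in> dunits \<Longrightarrow> y \<in> dunits \<Longrightarrow> x * y = y * (x::'d)"
proof -
  assume x: "x \<in> dunits" and y: "y \<in> dunits"
  obtain y' where y': "y * y' = 1" "y' * y = 1" "y' \<in> dunits" using y unfolding dunits_def by auto
  obtain a where a: "x ^ N = T a" using Nexp x by auto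
  have "(y * x * y') ^ N = y * x ^ N * y'" using conj_pow y' by blast
  also have "\<dots> = x ^ N" using a y' T_central by (metis mult.assoc mult_1_right)
  finally have "(y * x * y') ^ N = x ^ N" .
  moreover have "y * x * y' \<in> dunits" using mult_unit x y y' by blast
  ultimately have "y * x * y' = x" using L7 x Npos by blast
  hence "y * x * y' * y = x * y" by simp
  thus ?thesis using y' by (simp add: mult.assoc)
qed

end

context dsaN begin

definition w :: "'d \<Rightarrow> int" where "w x = (THE k. x ^ N = T k)"

lemma wprop: "x \<in> dunits \<Longrightarrow> x ^ N = T (w x)"
proof -
  assume "x \<in> dunits"
  then obtain k where k: "x ^ N = T k" using Nexp by auto
  have "(THE k. x ^ N = T k) = k" using k T_inj by (intro the_equality) auto
  thus ?thesis using k w_def by simp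
qed

lemma w_eq: "x \<in> dunits \<Longrightarrow> x ^ N = T k \<Longrightarrow> w x = k"
  using wprop T_inj by metis

lemma w_mult: "x \<in> dunits \<Longrightarrow> y \<in> dunits \<Longrightarrow> w (x * y) = w x + w y"
proof -
  assume x: "x \<in> dunits" and y: "y \<in> dunits"
  have "(x * y) ^ N = x ^ N * y ^ N" using mult_pow_comm L8[OF x y] by blast
  also have "\<dots> = T (w x + w y)" using wprop x y T_mult by simp
  finally show ?thesis using w_eq mult_unit x y by blast
qed

lemma w_inj: "x \<in> dunits \<Longrightarrow> y \<in> dunits \<Longrightarrow> w x = w y \<Longrightarrow> x = y"
  using wprop L7 Npos by metis

lemma w_T: "w (T k) = k * int N"
  using w_eq[OF T_unit] T_pow by blast

lemma w_one: "w 1 = 0"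
  using w_T[of 0] T0 by simp

lemma w_pow: "g \<in> dunits \<Longrightarrow> w (g ^ n) = int n * w g"
proof (induction n)
  case 0 thus ?case using w_one by simp
next
  case (Suc n)
  thus ?case using w_mult[OF Suc.prems pow_unit[OF Suc.prems]] by (simp add: algebra_simps)
qed

lemma w_inv: "g \<in> dunits \<Longrightarrow> g' \<in> dunits \<Longrightarrow> g * g' = 1 \<Longrightarrow> w g' = - w g"
  using w_mult w_one by force

lemma generator: "\<exists>g\<in>dunits. \<forall>y\<in>dunits. \<exists>j n. y = T j * g ^ n"
proof -
  define P where "P k \<longleftrightarrow> k > 0 \<and> (\<exists>x\<in>dunits. w x = int k)" for k
  have PN: "P N" unfolding P_def using Npos T_unit[of 1] w_T[of 1] by auto
  define d where "d = (LEAST k. P k)"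
  have Pd: "P d" unfolding d_def using PN by (rule LeastI)
  have dmin: "\<And>k. k < d \<Longrightarrow> \<not> P k" unfolding d_def by (rule not_less_Least)
  obtain g where g: "g \<in> dunits" "w g = int d" and dpos: "d > 0" using Pd P_def by auto
  obtain g' where g': "g * g' = 1" "g' * g = 1" using g unfolding dunits_def by auto
  have g'u: "g' \<in> dunits" using g' unfolding dunits_def by auto
  have wg': "w g' = - int d" using w_inv[OF g(1) g'u g'(1)] g by simp
  have divd: "w y = (w y div int d) * int d" if y: "y \<in> dunits" for y :: 'd
  proof -
    define q where "q = w y div int d"
    define r where "r = w y mod int d"
    define z where "z = y * (if q \<ge> 0 then g' ^ nat q else g ^ nat (- q))"
    have zu: "z \<in> dunits" unfolding z_def using y g g'u by (auto intro: mult_unit pow_unit)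
    have "w z = w y - q * int d"
      unfolding z_def using y g g'u wg'
      by (auto simp: w_mult pow_unit w_pow)
    hence wz: "w z = r" unfolding r_def q_def by (simp add: minus_div_mult_eq_mod)
    have r0: "r \<ge> 0" "r < int d" unfolding r_def using dpos by auto
    have "r = 0"
    proof (rule ccontr)
      assume "r \<noteq> 0"
      hence "P (nat r)" unfolding P_def using r0 wz zu by auto
      moreover have "nat r < d" using r0 by auto
      ultimately show False using dmin by blast
    qed
    thus ?thesis using r_def by (metis div_mult_mod_eq add.right_neutral)
  qed
  show ?thesis
  proof (intro bexI[OF _ g(1)] ballI)
    fix y :: 'd assume y: "y \<in> dunits"
    define q where "q = w y div int d"
    define e where "e = int N div int d"
    have wy: "w y = q * int d" using divd[OF y] q_def by simp
    have eN: "int N = e * int d" using divd[OF T_unit[of 1]] w_T[of 1] e_def by simp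
    have epos: "e > 0"
    proof (rule ccontr)
      assume "\<not> e > 0"
      hence "e * int d \<le> 0" by (simp add: mult_nonpos_nonneg)
      thus False using eN Npos by simp
    qed
    define n where "n = nat (q + e * \<bar>q\<bar>)"
    have "e * \<bar>q\<bar> \<ge> 1 * \<bar>q\<bar>" using epos by (intro mult_right_mono) auto
    hence nn: "q + e * \<bar>q\<bar> \<ge> 0" by linarith
    have "w (T (- \<bar>q\<bar>) * g ^ n) = - \<bar>q\<bar> * int N + int n * int d"
      using w_mult[OF T_unit pow_unit[OF g(1)]] w_T w_pow[OF g(1)] g(2) by simp
    also have "\<dots> = w y" unfolding n_def using nn eN wy by (simp add: algebra_simps)
    finally have "y = T (- \<bar>q\<bar>) * g ^ n"
      using w_inj[OF y mult_unit[OF T_unit pow_unit[OF g(1)]]] by metis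
    thus "\<exists>j n. y = T j * g ^ n" by blast
  qed
qed

end

context dsa begin

abbreviation U :: "'d monoid" where "U \<equiv> unit_group"

lemma U_simps [simp]: "carrier U = dunits" "mult U = (*)" "one U = 1"
  by (simp_all add: unit_group_def)

lemma U_group: "group U"
proof (rule groupI)
  fix x y z :: 'd
  show "x \<in> carrier U \<Longrightarrow> y \<in> carrier U \<Longrightarrow> x \<otimes>\<^bsub>U\<^esub> y \<in> carrier U"
    using mult_unit by simp
  show "\<one>\<^bsub>U\<^esub> \<in> carrier U" using T_unit[of 0] T0 by simp
  show "x \<otimes>\<^bsub>U\<^esub> y \<otimes>\<^bsub>U\<^esub> z = x \<otimes>\<^bsub>U\<^esub> (y \<otimes>\<^bsub>U\<^esub> z)" by (simp add: mult.assoc)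
  show "\<one>\<^bsub>U\<^esub> \<otimes>\<^bsub>U\<^esub> x = x" by simp
  assume "x \<in> carrier U"
  hence "x \<in> dunits" by simp
  then obtain y where "x * y = 1" "y * x = 1" unfolding dunits_def by auto
  moreover hence "y \<in> dunits" unfolding dunits_def by auto
  ultimately show "\<exists>y\<in>carrier U. y \<otimes>\<^bsub>U\<^esub> x = \<one>\<^bsub>U\<^esub>" by auto
qed

lemma H_eq: "\<phi> ` zmax_units = range T"
  unfolding zmax_units_def T_def by auto

lemma H_sub: "subgroup (range T) U"
proof (rule group.subgroupI[OF U_group])
  show "range T \<subseteq> carrier U" using T_unit by auto
  show "range T \<noteq> {}" by auto
  show "a \<in> range T \<Longrightarrow> a \<otimes>\<^bsub>U\<^esub> b \<in> range T" if "b \<in> range T" for a b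
    using that T_mult by auto
  fix a assume "a \<in> range T"
  then obtain k where k: "a = T k" by auto
  have "inv\<^bsub>U\<^esub> (T k) = T (- k)"
    using group.inv_equality[OF U_group, of "T (-k)" "T k"] T_mult[of "-k" k] T0 T_unit by simp
  thus "inv\<^bsub>U\<^esub> a \<in> range T" using k by auto
qed

lemma common_exp:
  assumes fin: "finite (carrier (U Mod range T))"
  shows "\<exists>N>0. \<forall>x\<in>dunits. \<exists>k. x ^ N = T k"
proof -
  define C where "C = carrier (U Mod range T)"
  define M where "M = card C"
  have C: "C = {range T #>\<^bsub>U\<^esub> a | a. a \<in> dunits}"
    unfolding C_def FactGroup_def RCOSETS_def by auto
  have "\<exists>k. x ^ fact M = T k" if x: "x \<in> dunits" for x
  proof -
    define f where "f i = range T #>\<^bsub>U\<^esub> x ^ i" for i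
    have "f ` {..M} \<subseteq> C" unfolding f_def C using pow_unit[OF x] by auto
    moreover have "\<not> card {..M} \<le> card C" using M_def by simp
    ultimately have "\<not> inj_on f {..M}" using card_inj_on_le fin C_def by metis
    then obtain i j where ij: "i \<le> M" "j \<le> M" "i \<noteq> j" "f i = f j"
      unfolding inj_on_def by auto
    obtain a b where ab: "a < b" "b \<le> M" "f a = f b" using ij
      by (metis linorder_neq_iff)
    have "x ^ b \<in> f b" unfolding f_def r_coset_def using T0 by (auto intro!: exI[of _ 0])
    hence "x ^ b \<in> f a" using ab by simp
    then obtain k where k: "x ^ b = T k * x ^ a" unfolding f_def r_coset_def by auto
    have "x ^ (b - a) * x ^ a = T k * x ^ a" using k ab by (simp add: power_add[symmetric])
    hence e: "x ^ (b - a) = T k" using cancel_r[OF pow_unit[OF x]] by blast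
    have "(b - a) dvd fact M" using ab by (intro dvd_fact) auto
    then obtain c where c: "fact M = (b - a) * c" by auto
    have "x ^ fact M = T (k * int c)" unfolding c power_mult e T_pow ..
    thus ?thesis by blast
  qed
  moreover have "(fact M :: nat) > 0" by simp
  ultimately show ?thesis by blast
qed

end

context dsaN begin

lemma U_comm: "comm_group U"
  using U_group L8 by (intro group.group_comm_groupI) auto

lemma cyclic: "cyclic_group (U Mod range T)"
proof -
  have nH: "range T \<lhd> U" using comm_group.subgroup_imp_normal[OF U_comm H_sub] .
  have GG: "group (U Mod range T)" using normal.factorgroup_is_group[OF nH] .
  obtain g where g: "g \<in> dunits" and gen: "\<And>y. y \<in> dunits \<Longrightarrow> \<exists>j n. y = T j * g ^ n"
    using generator by blast
  have Hs: "range T \<subseteq> carrier U" using T_unit by auto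
  let ?G = "U Mod range T"
  have carr: "carrier ?G = {range T #>\<^bsub>U\<^esub> a | a. a \<in> dunits}"
    unfolding FactGroup_def RCOSETS_def by auto
  have gc: "range T #>\<^bsub>U\<^esub> g \<in> carrier ?G" using carr g by auto
  have pw: "range T #>\<^bsub>U\<^esub> (g ^ n) \<in> generate ?G {range T #>\<^bsub>U\<^esub> g}" for n
  proof (induction n)
    case 0
    have "range T #>\<^bsub>U\<^esub> (g ^ 0) = \<one>\<^bsub>?G\<^esub>"
      using group.coset_mult_one[OF U_group Hs] by (simp add: FactGroup_def)
    thus ?case using generate.one by metis
  next
    case (Suc n)
    have "(range T #>\<^bsub>U\<^esub> (g ^ n)) \<otimes>\<^bsub>?G\<^esub> (range T #>\<^bsub>U\<^esub> g)
          = range T #>\<^bsub>U\<^esub> (g ^ n \<otimes>\<^bsub>U\<^esub> g)"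
      using normal.rcos_sum[OF nH] g pow_unit[OF g] by (simp add: FactGroup_def)
    also have "\<dots> = range T #>\<^bsub>U\<^esub> (g ^ Suc n)" by (simp del: power_Suc add: power_Suc2)
    finally show ?case
      using generate.eng[OF Suc generate.incl[of "range T #>\<^bsub>U\<^esub> g"]] by auto
  qed
  show ?thesis unfolding cyclic_group_def
  proof (intro bexI[OF _ gc] equalityI)
    show "generate ?G {range T #>\<^bsub>U\<^esub> g} \<subseteq> carrier ?G"
      using group.generate_incl[OF GG] gc by auto
    show "carrier ?G \<subseteq> generate ?G {range T #>\<^bsub>U\<^esub> g}"
    proof
      fix X assume "X \<in> carrier ?G"
      then obtain y where y: "y \<in> dunits" "X = range T #>\<^bsub>U\<^esub> y" using carr by auto
      obtain j n where yj: "y = T j * g ^ n" using gen[OF y(1)] by blast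
      have "range T #>\<^bsub>U\<^esub> y = (range T #>\<^bsub>U\<^esub> T j) #>\<^bsub>U\<^esub> g ^ n"
        using group.coset_mult_assoc[OF U_group Hs, of "T j" "g ^ n"] T_unit pow_unit[OF g] yj
        by simp
      also have "\<dots> = range T #>\<^bsub>U\<^esub> g ^ n"
        using subgroup.rcos_const[OF H_sub U_group, of "T j"] by simp
      finally show "X \<in> generate ?G {range T #>\<^bsub>U\<^esub> g}" using y pw by simp
    qed
  qed
qed

end

theorem mainTheorem17:
  fixes \<phi> :: "int option \<Rightarrow> 'd::{semiring,comm_monoid_add,monoid_mult}"
  assumes "division_semialgebra_zmax \<phi>"
    and "finite (carrier (unit_quotient \<phi>))"
  shows "cyclic_group (unit_quotient \<phi>)"
proof -
  interpret dsa \<phi> by unfold_locales (rule assms(1))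
  have fin: "finite (carrier (U Mod range T))"
    using assms(2) unfolding unit_quotient_def H_eq .
  obtain N where N: "N > 0" "\<And>x. x \<in> dunits \<Longrightarrow> \<exists>k. x ^ N = T k"
    using common_exp[OF fin] by blast
  interpret dsaN \<phi> N by unfold_locales (use N in auto)
  show ?thesis unfolding unit_quotient_def H_eq by (rule cyclic)
qed

end
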